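(* $\Sigma[3]=\bigcup_{n\ge0}(\mathcal S_n[3]\cup\mathcal S'_n[3])=\mathcal S[3]\cap V_{\mathcal R}=\Sigma\cap V$, where $V_{\mathcal R}=V\cap\mathcal R^4$ and $\mathcal S[3]$ is the unit sphere of $V$.
   Context: Let $\tau=(1+\sqrt5)/2$, $\tau'=(1-\sqrt5)/2$, $\mathcal R=\mathbb{Z}[\frac12,\tau]$. Let $\Delta\subset\mathbb{R}^4$ be the set of 120 vectors consisting of: the 8 vectors obtained from $(\pm1,0,0,0)$ by permuting coordinates; the 16 vectors $\frac12(\pm1,\pm1,\pm1,\pm1)$; and the 96 vectors obtained from $\frac12(0,\pm1,\pm\tau',\pm\tau)$ (all sign choices) by even permutations of the coordinates; $\Delta'$ is its image under $\tau\leftrightarrow\tau'$ in each coordinate. For a unit vector $a$, $r_a(x)=x-2(x\cdot a)a$; $H^\infty$ is generated by $r_a$, $a\in\Delta\cup\Delta'$, and $\Sigma=H^\infty(\Delta\cup\Delta')$. Let $V=\{x\in\mathbb{R}^4:x_1=0\}$, $\Delta[3]=\Delta\cap V$, $\Delta[3]'=\Delta'\cap V$, $H^\infty[3]$ the group of orthogonal maps of $V$ generated by the reflections $r_a$, $a\in\Delta[3]\cup\Delta[3]'$, and $\Sigma[3]=H^\infty[3](\Delta[3]\cup\Delta[3]')$. Identify $V$ with $\mathbb{R}^3$ via the last three coordinates. Let $\mathbb F_4=\mathbb{Z}[\tau]/2\mathbb{Z}[\tau]$ with coordinatewise reduction $y\mapsto\bar y$. For $n\ge1$, $\mathcal S_n[3]=\{x\in2^{-n}\mathbb{Z}[\tau]^3: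 x\cdot x=1,\ \overline{2^nx}\in\{(\bar1,\bar{\tau'},\bar\tau),(\bar{\tau'},\bar\tau,\bar1),(\bar\tau,\bar1,\bar{\tau'})\}\}$, $\mathcal S'_n[3]$ the same with $\bar\tau,\bar{\tau'}$ interchanged, and $\mathcal S_0[3]=\mathcal S'_0[3]=\{(\pm1,0,0),(0,\pm1,0),(0,0,\pm1)\}$. *)

theory Defs
  imports "HOL-Analysis.Analysis"
begin

definition tau :: real where "tau = (1 + sqrt 5) / 2"
definition tau' :: real where "tau' = (1 - sqrt 5) / 2"

definition Ztau :: "real set" where
  "Ztau = {of_int a + of_int b * tau | a b. True}"
definition Rring :: "real set" where
  "Rring = {y / 2 ^ n | y n. y \<in> Ztau}"

text \<open>Congruence modulo 2 Z[tau] (equality of reductions in F_4 = Z[tau]/2Z[tau]).\<close>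
definition cong2 :: "real \<Rightarrow> real \<Rightarrow> bool" where
  "cong2 y z \<longleftrightarrow> y \<in> Ztau \<and> z \<in> Ztau \<and> (y - z) / 2 \<in> Ztau"

definition refl :: "'a::real_inner \<Rightarrow> 'a \<Rightarrow> 'a" where
  "refl a x = x - (2 * (x \<bullet> a)) *\<^sub>R a"

inductive_set refl_group :: "'a::real_inner set \<Rightarrow> ('a \<Rightarrow> 'a) set" for A where
  idI: "id \<in> refl_group A"
| genI: "a \<in> A \<Longrightarrow> refl a \<in> refl_group A"
| compI: "g \<in> refl_group A \<Longrightarrow> h \<in> refl_group A \<Longrightarrow> g \<circ> h \<in> refl_group A"
| invI: "h \<in> refl_group A \<Longrightarrow> inv h \<in> refl_group A"

definition refl_orbit :: "'a::real_inner set \<Rightarrow> 'a set" where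
  "refl_orbit A = {h a | h a. h \<in> refl_group A \<and> a \<in> A}"

definition perm_vec :: "(4 \<Rightarrow> 4) \<Rightarrow> real^4 \<Rightarrow> real^4" where
  "perm_vec p w = (\<chi> i. w $ p i)"

definition Delta_gen :: "real \<Rightarrow> real \<Rightarrow> (real^4) set" where
  "Delta_gen t t' =
     {s *\<^sub>R axis i 1 | s i. s \<in> {-1, 1}}
   \<union> {vector [a/2, b/2, c/2, d/2] | a b c d. a \<in> {-1,1} \<and> b \<in> {-1,1} \<and> c \<in> {-1,1} \<and> d \<in> {-1,1}}
   \<union> {perm_vec p (vector [0, b/2, c * t' / 2, d * t / 2]) | p b c d.
        p permutes (UNIV :: 4 set) \<and> evenperm p \<and> b \<in> {-1,1} \<and> c \<in> {-1,1} \<and> d \<in> {-1,1}}"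

definition Delta :: "(real^4) set" where "Delta = Delta_gen tau tau'"
definition Delta' :: "(real^4) set" where "Delta' = Delta_gen tau' tau"

definition Sigma4 :: "(real^4) set" where "Sigma4 = refl_orbit (Delta \<union> Delta')"

text \<open>Identification of R^3 with V = {x. x_1 = 0} via the last three coordinates.\<close>
definition embV :: "real^3 \<Rightarrow> real^4" where
  "embV y = vector [0, y $ 1, y $ 2, y $ 3]"

definition Delta3 :: "(real^3) set" where "Delta3 = {y. embV y \<in> Delta}"
definition Delta3' :: "(real^3) set" where "Delta3' = {y. embV y \<in> Delta'}"

definition Sigma3 :: "(real^3) set" where "Sigma3 = refl_orbit (Delta3 \<union> Delta3')"

definition S0 :: "(real^3) set" where
  "S0 = {s *\<^sub>R axis i 1 | s i. s \<in> {-1, 1}}"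

definition Sn_gen :: "real \<Rightarrow> real \<Rightarrow> nat \<Rightarrow> (real^3) set" where
  "Sn_gen t t' n = (if n = 0 then S0 else
     {x. (\<forall>i. 2 ^ n * x $ i \<in> Ztau) \<and> x \<bullet> x = 1 \<and>
         (\<exists>(a, b, c) \<in> {(1, t', t), (t', t, 1), (t, 1, t')}.
            cong2 (2 ^ n * x $ 1) a \<and> cong2 (2 ^ n * x $ 2) b \<and> cong2 (2 ^ n * x $ 3) c)})"

definition Sn :: "nat \<Rightarrow> (real^3) set" where "Sn = Sn_gen tau tau'"
definition Sn' :: "nat \<Rightarrow> (real^3) set" where "Sn' = Sn_gen tau' tau"

end

theory Submission
  imports Defs
begin

definition zt :: "int \<Rightarrow> int \<Rightarrow> real" where "zt a b = of_int a + of_int b * tau"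

lemma tau_sq: "tau * tau = tau + 1"
  unfolding tau_def by (simp add: field_simps algebra_simps)

lemma zt_add: "zt a b + zt c d = zt (a+c) (b+d)"
  unfolding zt_def by (simp add: algebra_simps)
lemma zt_diff: "zt a b - zt c d = zt (a-c) (b-d)"
  unfolding zt_def by (simp add: algebra_simps)
lemma zt_uminus: "- zt a b = zt (-a) (-b)"
  unfolding zt_def by (simp add: algebra_simps)
lemma zt_mult: "zt a b * zt c d = zt (a*c+b*d) (a*d+b*c+b*d)"
proof -
  have "zt a b * zt c d = of_int (a*c) + of_int (a*d+b*c) * tau + of_int (b*d) * (tau*tau)"
    unfolding zt_def by (simp add: algebra_simps)
  also have "\<dots> = zt (a*c+b*d) (a*d+b*c+b*d)" unfolding tau_sq zt_def by (simp add: algebra_simps)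
  finally show ?thesis .
qed

lemma quad_zero: "(a::int)^2 + a*b - b^2 = 0 \<Longrightarrow> a = 0 \<and> b = 0"
proof (induction "nat (\<bar>a\<bar> + \<bar>b\<bar>)" arbitrary: a b rule: less_induct)
  case less
  show ?case
  proof (cases "even a \<and> even b")
    case True
    then obtain a' b' where ab: "a = 2*a'" "b = 2*b'" by (auto elim!: evenE)
    have "4 * (a'^2 + a'*b' - b'^2) = 0" using less.prems ab by (simp add: algebra_simps power2_eq_square)
    hence e: "a'^2 + a'*b' - b'^2 = 0" by simp
    show ?thesis
    proof (cases "a = 0 \<and> b = 0")
      case False
      hence "nat (\<bar>a'\<bar> + \<bar>b'\<bar>) < nat (\<bar>a\<bar> + \<bar>b\<bar>)" using ab by auto
      from less.hyps[OF this e] ab show ?thesis by simp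
    qed simp
  next
    case False
    hence "odd (a^2 + a*b - b^2)" by (auto simp: power2_eq_square)
    with less.prems show ?thesis by simp
  qed
qed

lemma zt_zero: "zt a b = 0 \<Longrightarrow> a = 0 \<and> b = 0"
proof -
  assume h: "zt a b = 0"
  hence "of_int a = - of_int b * tau" unfolding zt_def by (simp add: algebra_simps)
  hence "(of_int a::real) * of_int a = of_int b * of_int b * (tau * tau)" by (simp add: algebra_simps)
  hence "(of_int a::real) * of_int a = of_int b * of_int b * tau + of_int b * of_int b" 
    by (simp add: tau_sq algebra_simps)
  also have "of_int b * of_int b * tau = of_int b * (of_int b * tau)" by simp
  also have "of_int b * tau = - (of_int a::real)" using h unfolding zt_def by (simp add: algebra_simps)
  finally have "real_of_int (a^2 + a*b - b^2) = 0" by (simp add: power2_eq_square algebra_simps)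
  hence "a^2 + a*b - b^2 = 0" by linarith
  thus ?thesis by (rule quad_zero)
qed

lemma zt_inj: "zt a b = zt c d \<longleftrightarrow> a = c \<and> b = d"
proof
  assume "zt a b = zt c d"
  hence "zt (a-c) (b-d) = 0" by (simp add: zt_diff[symmetric])
  thus "a = c \<and> b = d" using zt_zero by fastforce
qed simp

lemma Ztau_iff: "y \<in> Ztau \<longleftrightarrow> (\<exists>a b. y = zt a b)"
  unfolding Ztau_def zt_def by auto


definition red :: "real \<Rightarrow> int \<times> int" where
  "red y = (THE r. \<exists>a b. y = zt a b \<and> r = (a mod 2, b mod 2))"

lemma red_zt[simp]: "red (zt a b) = (a mod 2, b mod 2)"
  unfolding red_def by (rule the_equality) (auto simp: zt_inj)

definition f4add :: "int \<times> int \<Rightarrow> int \<times> int \<Rightarrow> int \<times> int" where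
  "f4add x y = ((fst x + fst y) mod 2, (snd x + snd y) mod 2)"
definition f4mul :: "int \<times> int \<Rightarrow> int \<times> int \<Rightarrow> int \<times> int" where
  "f4mul x y = ((fst x * fst y + snd x * snd y) mod 2, (fst x * snd y + snd x * fst y + snd x * snd y) mod 2)"

lemma Ztau_add: "y \<in> Ztau \<Longrightarrow> z \<in> Ztau \<Longrightarrow> y + z \<in> Ztau"
  unfolding Ztau_iff by (metis zt_add)
lemma Ztau_diff: "y \<in> Ztau \<Longrightarrow> z \<in> Ztau \<Longrightarrow> y - z \<in> Ztau"
  unfolding Ztau_iff by (metis zt_diff)
lemma Ztau_mult: "y \<in> Ztau \<Longrightarrow> z \<in> Ztau \<Longrightarrow> y * z \<in> Ztau"
  unfolding Ztau_iff by (metis zt_mult)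
lemma Ztau_uminus: "y \<in> Ztau \<Longrightarrow> - y \<in> Ztau"
  unfolding Ztau_iff by (metis zt_uminus)
lemma zt_in[simp]: "zt a b \<in> Ztau" by (auto simp: Ztau_iff)
lemma zt_0: "0 = zt 0 0" by (simp add: zt_def)
lemma zt_1: "1 = zt 1 0" by (simp add: zt_def)
lemma zt_tau: "tau = zt 0 1" by (simp add: zt_def)
lemma zt_tau': "tau' = zt 1 (-1)" by (simp add: zt_def tau_def tau'_def field_simps)
lemma Ztau_0[simp]: "0 \<in> Ztau" and Ztau_1[simp]: "1 \<in> Ztau" and Ztau_tau[simp]: "tau \<in> Ztau"
  and Ztau_tau'[simp]: "tau' \<in> Ztau"
  by (simp_all only: zt_0 zt_1 zt_tau zt_tau' zt_in)
lemma Ztau_of_int[simp]: "of_int k \<in> Ztau"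
proof -
  have "of_int k = zt k 0" by (simp add: zt_def)
  thus ?thesis by simp
qed
lemma Ztau_numeral[simp]: "numeral k \<in> Ztau"
  using Ztau_of_int[of "numeral k"] by simp

lemma red_add: "y \<in> Ztau \<Longrightarrow> z \<in> Ztau \<Longrightarrow> red (y + z) = f4add (red y) (red z)"
  by (auto simp: Ztau_iff zt_add f4add_def mod_add_eq)
lemma red_diff: "y \<in> Ztau \<Longrightarrow> z \<in> Ztau \<Longrightarrow> red (y - z) = f4add (red y) (red z)"
proof -
  assume "y \<in> Ztau" "z \<in> Ztau"
  then obtain a b c d where "y = zt a b" "z = zt c d" by (auto simp: Ztau_iff)
  moreover have "(a - c) mod 2 = (a + c) mod 2" for a c :: int
    by presburger
  ultimately show ?thesis by (auto simp: zt_diff f4add_def mod_add_eq)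
qed
lemma red_uminus: "y \<in> Ztau \<Longrightarrow> red (- y) = red y"
proof -
  assume "y \<in> Ztau"
  then obtain a b where "y = zt a b" by (auto simp: Ztau_iff)
  moreover have "(- a) mod 2 = a mod 2" for a :: int by presburger
  ultimately show ?thesis by (auto simp: zt_uminus)
qed
lemma m2: "((x1::int)*x2 + x3*x4) mod 2 = ((x1 mod 2)*(x2 mod 2) + (x3 mod 2)*(x4 mod 2)) mod 2"
proof -
  have "(x1*x2 + x3*x4) mod 2 = ((x1*x2) mod 2 + (x3*x4) mod 2) mod 2" by (rule mod_add_eq[symmetric])
  also have "\<dots> = ((x1 mod 2 * (x2 mod 2)) mod 2 + (x3 mod 2 * (x4 mod 2)) mod 2) mod 2" by (simp only: mod_mult_eq)
  also have "\<dots> = ((x1 mod 2)*(x2 mod 2) + (x3 mod 2)*(x4 mod 2)) mod 2" by (simp only: mod_add_eq)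
  finally show ?thesis .
qed
lemma m3: "((x1::int)*x2 + x3*x4 + x5*x6) mod 2 = ((x1 mod 2)*(x2 mod 2) + (x3 mod 2)*(x4 mod 2) + (x5 mod 2)*(x6 mod 2)) mod 2"
proof -
  have "(x1*x2 + x3*x4 + x5*x6) mod 2 = ((x1*x2 + x3*x4) mod 2 + (x5*x6) mod 2) mod 2" by (rule mod_add_eq[symmetric])
  also have "\<dots> = (((x1 mod 2)*(x2 mod 2) + (x3 mod 2)*(x4 mod 2)) mod 2 + (x5 mod 2 * (x6 mod 2)) mod 2) mod 2" by (simp only: mod_mult_eq m2[of x1 x2 x3 x4])
  also have "\<dots> = ((x1 mod 2)*(x2 mod 2) + (x3 mod 2)*(x4 mod 2) + (x5 mod 2)*(x6 mod 2)) mod 2" by (simp only: mod_add_eq)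
  finally show ?thesis .
qed
lemma red_mult: "y \<in> Ztau \<Longrightarrow> z \<in> Ztau \<Longrightarrow> red (y * z) = f4mul (red y) (red z)"
proof -
  assume "y \<in> Ztau" "z \<in> Ztau"
  then obtain a b c d where "y = zt a b" "z = zt c d" by (auto simp: Ztau_iff)
  thus ?thesis using m2[of a c b d] m3[of a d b c b d] by (simp add: zt_mult f4mul_def)
qed

lemma red_range: "red y \<in> {0,1} \<times> {0,1} \<or> y \<notin> Ztau"
  by (auto simp: Ztau_iff)

lemma half_Ztau: "y \<in> Ztau \<Longrightarrow> y / 2 \<in> Ztau \<longleftrightarrow> red y = (0,0)"
proof -
  assume "y \<in> Ztau"
  then obtain a b where y: "y = zt a b" by (auto simp: Ztau_iff)
  show ?thesis
  proof
    assume "y / 2 \<in> Ztau"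
    then obtain c d where "y / 2 = zt c d" by (auto simp: Ztau_iff)
    hence "y = zt (2*c) (2*d)" by (simp add: zt_def field_simps)
    with y have "a = 2*c" "b = 2*d" by (auto simp: zt_inj)
    thus "red y = (0,0)" using y by simp
  next
    assume "red y = (0,0)"
    hence "even a" "even b" using y by (auto simp: even_iff_mod_2_eq_zero)
    then obtain c d where "a = 2*c" "b = 2*d" by (auto elim!: evenE)
    hence "y / 2 = zt c d" using y by (simp add: zt_def field_simps)
    thus "y / 2 \<in> Ztau" by simp
  qed
qed

lemma cong2_red: "cong2 y z \<longleftrightarrow> y \<in> Ztau \<and> z \<in> Ztau \<and> red y = red z"
proof -
  have "red y = red z \<longleftrightarrow> f4add (red y) (red z) = (0,0)" if "y \<in> Ztau" "z \<in> Ztau"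
    using red_range[of y] red_range[of z] that by (auto simp: f4add_def)
  thus ?thesis unfolding cong2_def using half_Ztau[OF Ztau_diff] red_diff by auto
qed


lemma fin_pat:
  fixes p1 q1 p2 q2 p3 q3 :: int
  assumes "p1 \<in> {0,1}" "q1 \<in> {0,1}" "p2 \<in> {0,1}" "q2 \<in> {0,1}" "p3 \<in> {0,1}" "q3 \<in> {0,1}"
    "(p1+q1+p2+q2+p3+q3) mod 4 = 0" "(2*p1*q1+q1+2*p2*q2+q2+2*p3*q3+q3) mod 4 = 0"
    "\<not> (p1 = 0 \<and> q1 = 0 \<and> p2 = 0 \<and> q2 = 0 \<and> p3 = 0 \<and> q3 = 0)"
  shows "((p1,q1),(p2,q2),(p3,q3)) \<in> {((1,0),(1,1),(0,1)), ((1,1),(0,1),(1,0)), ((0,1),(1,0),(1,1)),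
      ((1,0),(0,1),(1,1)), ((0,1),(1,1),(1,0)), ((1,1),(1,0),(0,1))}"
proof -
  from assms(1-6) have "(p1=0 \<or> p1=1) \<and> (q1=0 \<or> q1=1) \<and> (p2=0 \<or> p2=1) \<and> (q2=0 \<or> q2=1) \<and> (p3=0 \<or> p3=1) \<and> (q3=0 \<or> q3=1)" by auto
  then show ?thesis using assms(7-9) by (elim conjE disjE) simp_all
qed

definition P6 :: "((int\<times>int)\<times>(int\<times>int)\<times>(int\<times>int)) set" where
  "P6 = {((1,0),(1,1),(0,1)), ((1,1),(0,1),(1,0)), ((0,1),(1,0),(1,1)),
      ((1,0),(0,1),(1,1)), ((0,1),(1,1),(1,0)), ((1,1),(1,0),(0,1))}"

lemma sq_dec: "\<exists>c. (a::int)^2 = 4*c + a mod 2"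
proof -
  obtain k where k: "a = 2*k + a mod 2" by (metis div_mult_mod_eq mult.commute)
  have "a mod 2 \<in> {0,1}" by auto
  hence "(a mod 2)^2 = a mod 2" by auto
  hence "a^2 = 4*(k^2 + k*(a mod 2)) + a mod 2"
    by (subst k) (simp add: power2_eq_square algebra_simps)
  thus ?thesis by blast
qed

lemma prod_dec: "\<exists>c. 2*(a::int)*b = 4*c + 2*((a mod 2)*(b mod 2))"
proof -
  obtain k where k: "a = 2*k + a mod 2" by (metis div_mult_mod_eq mult.commute)
  obtain l where l: "b = 2*l + b mod 2" by (metis div_mult_mod_eq mult.commute)
  have "2*a*b = 2*(2*k + a mod 2)*(2*l + b mod 2)" using k l by simp
  also have "\<dots> = 4*(2*k*l + k*(b mod 2) + (a mod 2)*l) + 2*((a mod 2)*(b mod 2))"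
    by (simp add: algebra_simps)
  finally show ?thesis by blast
qed

lemma mod4_shift: "(4*k + s) mod 4 = (s::int) mod 4" by presburger

lemma int_pat:
  fixes a1 b1 a2 b2 a3 b3 :: int
  assumes A: "(a1^2+b1^2+a2^2+b2^2+a3^2+b3^2) mod 4 = 0"
    and B: "(2*a1*b1+b1^2+2*a2*b2+b2^2+2*a3*b3+b3^2) mod 4 = 0"
    and ne: "\<not> (even a1 \<and> even b1 \<and> even a2 \<and> even b2 \<and> even a3 \<and> even b3)"
  shows "((a1 mod 2, b1 mod 2),(a2 mod 2, b2 mod 2),(a3 mod 2, b3 mod 2)) \<in> P6"
proof -
  obtain c1 c2 c3 c4 c5 c6 where c: "a1^2 = 4*c1 + a1 mod 2" "b1^2 = 4*c2 + b1 mod 2"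
    "a2^2 = 4*c3 + a2 mod 2" "b2^2 = 4*c4 + b2 mod 2" "a3^2 = 4*c5 + a3 mod 2" "b3^2 = 4*c6 + b3 mod 2"
    using sq_dec by metis
  obtain e1 e2 e3 where e: "2*a1*b1 = 4*e1 + 2*((a1 mod 2)*(b1 mod 2))"
     "2*a2*b2 = 4*e2 + 2*((a2 mod 2)*(b2 mod 2))" "2*a3*b3 = 4*e3 + 2*((a3 mod 2)*(b3 mod 2))"
    using prod_dec by metis
  have eA: "a1^2+b1^2+a2^2+b2^2+a3^2+b3^2 = 4*(c1+c2+c3+c4+c5+c6) +
      (a1 mod 2 + b1 mod 2 + a2 mod 2 + b2 mod 2 + a3 mod 2 + b3 mod 2)" using c by simp
  have A': "(a1 mod 2 + b1 mod 2 + a2 mod 2 + b2 mod 2 + a3 mod 2 + b3 mod 2) mod 4 = 0"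
    using A unfolding eA mod4_shift .
  have eB: "2*a1*b1+b1^2+2*a2*b2+b2^2+2*a3*b3+b3^2 = 4*(e1+c2+e2+c4+e3+c6) +
      (2*(a1 mod 2)*(b1 mod 2) + b1 mod 2 + 2*(a2 mod 2)*(b2 mod 2) + b2 mod 2 + 2*(a3 mod 2)*(b3 mod 2) + b3 mod 2)"
    using c e by simp
  have B': "(2*(a1 mod 2)*(b1 mod 2) + b1 mod 2 + 2*(a2 mod 2)*(b2 mod 2) + b2 mod 2 + 2*(a3 mod 2)*(b3 mod 2) + b3 mod 2) mod 4 = 0"
    using B unfolding eB mod4_shift .
  have ne': "\<not> (a1 mod 2 = 0 \<and> b1 mod 2 = 0 \<and> a2 mod 2 = 0 \<and> b2 mod 2 = 0 \<and> a3 mod 2 = 0 \<and> b3 mod 2 = 0)"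
    using ne by (simp add: even_iff_mod_2_eq_zero)
  show ?thesis unfolding P6_def
    by (rule fin_pat[OF _ _ _ _ _ _ A' B' ne']) auto
qed

lemma pattern:
  assumes "y1 \<in> Ztau" "y2 \<in> Ztau" "y3 \<in> Ztau" "y1*y1+y2*y2+y3*y3 = 4^N" "N \<ge> 1"
    "\<not> (y1/2 \<in> Ztau \<and> y2/2 \<in> Ztau \<and> y3/2 \<in> Ztau)"
  shows "(red y1, red y2, red y3) \<in> P6"
proof -
  obtain a1 b1 a2 b2 a3 b3 where y: "y1 = zt a1 b1" "y2 = zt a2 b2" "y3 = zt a3 b3"
    using assms(1-3) by (auto simp: Ztau_iff)
  have "zt (a1^2+b1^2+a2^2+b2^2+a3^2+b3^2) (2*a1*b1+b1^2+2*a2*b2+b2^2+2*a3*b3+b3^2) = zt (4^N) 0"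
  proof -
    have "y1*y1+y2*y2+y3*y3 = zt (a1^2+b1^2+a2^2+b2^2+a3^2+b3^2) (2*a1*b1+b1^2+2*a2*b2+b2^2+2*a3*b3+b3^2)"
      unfolding y zt_mult zt_add by (simp add: power2_eq_square algebra_simps)
    moreover have "(4::real)^N = zt (4^N) 0" by (simp add: zt_def)
    ultimately show ?thesis using assms(4) by simp
  qed
  hence eq: "a1^2+b1^2+a2^2+b2^2+a3^2+b3^2 = 4^N" "2*a1*b1+b1^2+2*a2*b2+b2^2+2*a3*b3+b3^2 = 0"
    by (simp_all add: zt_inj)
  have "(4::int)^N mod 4 = 0" using assms(5) by (cases N) auto
  hence A: "(a1^2+b1^2+a2^2+b2^2+a3^2+b3^2) mod 4 = 0" using eq(1) by simp
  have B: "(2*a1*b1+b1^2+2*a2*b2+b2^2+2*a3*b3+b3^2) mod 4 = 0" using eq(2) by simp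
  have "\<not> (even a1 \<and> even b1 \<and> even a2 \<and> even b2 \<and> even a3 \<and> even b3)"
  proof -
    have h: "y1/2 \<in> Ztau \<longleftrightarrow> even a1 \<and> even b1" "y2/2 \<in> Ztau \<longleftrightarrow> even a2 \<and> even b2"
      "y3/2 \<in> Ztau \<longleftrightarrow> even a3 \<and> even b3"
      using half_Ztau[of y1] half_Ztau[of y2] half_Ztau[of y3] y by (simp_all add: even_iff_mod_2_eq_zero)
    with assms(6) show ?thesis by blast
  qed
  from int_pat[OF A B this] show ?thesis using y by simp
qed

lemma six_sq:
  fixes a1 b1 a2 b2 a3 b3 :: int
  assumes "a1^2 + b1^2 + a2^2 + b2^2 + a3^2 + b3^2 = 1"
    "2*a1*b1+b1^2+2*a2*b2+b2^2+2*a3*b3+b3^2 = 0"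
  shows "b1 = 0"
proof (rule ccontr)
  assume "b1 \<noteq> 0"
  hence "0 < b1^2" by simp
  hence b1: "1 \<le> b1^2" by linarith
  have nn: "0 \<le> a1^2" "0 \<le> a2^2" "0 \<le> b2^2" "0 \<le> a3^2" "0 \<le> b3^2" by simp_all
  have "a1^2 = 0" "a2^2 = 0" "b2^2 = 0" "a3^2 = 0" "b3^2 = 0" using assms(1) b1 nn by linarith+
  hence "a1 = 0" "a2 = 0" "b2 = 0" "a3 = 0" "b3 = 0" by simp_all
  with assms(2) have "b1^2 = 0" by simp
  with b1 show False by simp
qed

lemma sq_le1: "(a::int)^2 \<le> 1 \<Longrightarrow> a = -1 \<or> a = 0 \<or> a = 1"
proof (rule ccontr)
  assume "a^2 \<le> 1" "\<not> (a = -1 \<or> a = 0 \<or> a = 1)"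
  hence "2 \<le> \<bar>a\<bar>" by auto
  hence "2^2 \<le> \<bar>a\<bar>^2" by (rule power_mono) simp
  with \<open>a^2 \<le> 1\<close> show False by simp
qed

lemma zero_case:
  assumes "y1 \<in> Ztau" "y2 \<in> Ztau" "y3 \<in> Ztau" "y1*y1+y2*y2+y3*y3 = 1"
  shows "(y1,y2,y3) \<in> {(1,0,0),(-1,0,0),(0,1,0),(0,-1,0),(0,0,1),(0,0,-1)}"
proof -
  obtain a1 b1 a2 b2 a3 b3 where y: "y1 = zt a1 b1" "y2 = zt a2 b2" "y3 = zt a3 b3"
    using assms(1-3) by (auto simp: Ztau_iff)
  have "zt (a1^2+b1^2+a2^2+b2^2+a3^2+b3^2) (2*a1*b1+b1^2+2*a2*b2+b2^2+2*a3*b3+b3^2) = zt 1 0"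
  proof -
    have "y1*y1+y2*y2+y3*y3 = zt (a1^2+b1^2+a2^2+b2^2+a3^2+b3^2) (2*a1*b1+b1^2+2*a2*b2+b2^2+2*a3*b3+b3^2)"
      unfolding y zt_mult zt_add by (simp add: power2_eq_square algebra_simps)
    thus ?thesis using assms(4) by (simp add: zt_def)
  qed
  hence eq: "a1^2+b1^2+a2^2+b2^2+a3^2+b3^2 = 1" "2*a1*b1+b1^2+2*a2*b2+b2^2+2*a3*b3+b3^2 = 0"
    by (simp_all add: zt_inj)
  have "b1 = 0" using six_sq[OF eq] .
  moreover have "b2 = 0" using six_sq[of a2 b2 a1 b1 a3 b3] eq by (simp add: algebra_simps)
  moreover have "b3 = 0" using six_sq[of a3 b3 a1 b1 a2 b2] eq by (simp add: algebra_simps)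
  ultimately have b: "b1 = 0" "b2 = 0" "b3 = 0" by auto
  with eq(1) have s: "a1^2+a2^2+a3^2 = 1" by simp
  have nn: "0 \<le> a1^2" "0 \<le> a2^2" "0 \<le> a3^2" by simp_all
  have "a1 = -1 \<or> a1 = 0 \<or> a1 = 1" "a2 = -1 \<or> a2 = 0 \<or> a2 = 1" "a3 = -1 \<or> a3 = 0 \<or> a3 = 1"
    using s nn by (intro sq_le1; linarith)+
  hence "(a1,a2,a3) \<in> {(1,0,0),(-1,0,0),(0,1,0),(0,-1,0),(0,0,1),(0,0,-1)}"
    using s by (elim disjE) simp_all
  thus ?thesis using y b by (auto simp: zt_def)
qed


lemma vector_4 [simp]:
 "(vector [x,y,z,w] ::('a::zero)^4)$1 = x"
 "(vector [x,y,z,w] ::('a::zero)^4)$2 = y"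
 "(vector [x,y,z,w] ::('a::zero)^4)$3 = z"
 "(vector [x,y,z,w] ::('a::zero)^4)$4 = w"
  unfolding vector_def by simp_all

lemma inner3: "(x::real^3) \<bullet> y = x$1*y$1 + x$2*y$2 + x$3*y$3"
  by (simp add: inner_vec_def sum_3)
lemma inner4: "(x::real^4) \<bullet> y = x$1*y$1 + x$2*y$2 + x$3*y$3 + x$4*y$4"
  by (simp add: inner_vec_def sum_4)

lemma embV_nth [simp]: "embV y $ 1 = 0" "embV y $ 2 = y$1" "embV y $ 3 = y$2" "embV y $ 4 = y$3"
  by (simp_all add: embV_def)

lemma embV_inner: "embV x \<bullet> embV y = x \<bullet> y"
  by (simp add: inner3 inner4)

lemma embV_diff: "embV (x - y) = embV x - embV y"
  by (simp add: vec_eq_iff forall_4)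
lemma embV_scale: "embV (c *\<^sub>R x) = c *\<^sub>R embV x"
  by (simp add: vec_eq_iff forall_4)

lemma refl_embV: "refl (embV a) (embV x) = embV (refl a x)"
  unfolding refl_def embV_diff embV_scale embV_inner ..

lemma Rring_iff: "x \<in> Rring \<longleftrightarrow> (\<exists>n. 2^n * x \<in> Ztau)"
proof
  assume "x \<in> Rring"
  then obtain y n where "y \<in> Ztau" "x = y / 2^n" unfolding Rring_def by auto
  thus "\<exists>n. 2^n * x \<in> Ztau" by (intro exI[of _ n]) simp
next
  assume "\<exists>n. 2^n * x \<in> Ztau"
  then obtain n where "2^n * x \<in> Ztau" by auto
  moreover have "x = (2^n * x) / 2^n" by simp
  ultimately show "x \<in> Rring" unfolding Rring_def by blast
qed

lemma Ztau_pow2: "(2::real)^k \<in> Ztau"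
  using Ztau_of_int[of "2^k"] by simp

lemma Ztau_shift: "2^n * x \<in> Ztau \<Longrightarrow> n \<le> m \<Longrightarrow> 2^m * x \<in> Ztau"
proof -
  assume "2^n * x \<in> Ztau" "n \<le> m"
  then obtain k where "m = n + k" by (metis le_add_diff_inverse)
  hence e: "2^m * x = 2^k * (2^n * x)" by (simp add: power_add)
  show ?thesis unfolding e by (rule Ztau_mult[OF Ztau_pow2 \<open>2^n * x \<in> Ztau\<close>])
qed

lemma Rring_add: "x \<in> Rring \<Longrightarrow> y \<in> Rring \<Longrightarrow> x + y \<in> Rring"
proof -
  assume "x \<in> Rring" "y \<in> Rring"
  then obtain n m where "2^n * x \<in> Ztau" "2^m * y \<in> Ztau" by (auto simp: Rring_iff)
  hence "2^(n+m) * x \<in> Ztau" "2^(n+m) * y \<in> Ztau" by (auto intro: Ztau_shift)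
  hence "2^(n+m) * (x + y) \<in> Ztau" by (simp add: distrib_left Ztau_add)
  thus ?thesis by (auto simp: Rring_iff)
qed
lemma Rring_mult: "x \<in> Rring \<Longrightarrow> y \<in> Rring \<Longrightarrow> x * y \<in> Rring"
proof -
  assume "x \<in> Rring" "y \<in> Rring"
  then obtain n m where "2^n * x \<in> Ztau" "2^m * y \<in> Ztau" by (auto simp: Rring_iff)
  hence "(2^n * x) * (2^m * y) \<in> Ztau" by (rule Ztau_mult)
  hence "2^(n+m) * (x * y) \<in> Ztau" by (simp add: power_add algebra_simps)
  thus ?thesis by (auto simp: Rring_iff)
qed
lemma Rring_uminus: "x \<in> Rring \<Longrightarrow> - x \<in> Rring"
  by (auto simp: Rring_iff intro: exI dest: Ztau_uminus)
lemma Rring_diff: "x \<in> Rring \<Longrightarrow> y \<in> Rring \<Longrightarrow> x - y \<in> Rring"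
  using Rring_add[of x "-y"] Rring_uminus by simp
lemma Ztau_Rring: "x \<in> Ztau \<Longrightarrow> x \<in> Rring"
  by (auto simp: Rring_iff intro: exI[of _ 0])
lemma Rring_numeral[simp]: "numeral k \<in> Rring" by (simp add: Ztau_Rring)
lemma Rring_of_int[simp]: "of_int k \<in> Rring" by (simp add: Ztau_Rring)
lemma Rring_1[simp]: "1 \<in> Rring" and Rring_0[simp]: "0 \<in> Rring" by (simp_all add: Ztau_Rring)

lemma Rring_half: "x \<in> Rring \<Longrightarrow> x / 2 \<in> Rring"
proof -
  assume "x \<in> Rring"
  then obtain n where "2^n * x \<in> Ztau" by (auto simp: Rring_iff)
  moreover have "2^(Suc n) * (x/2) = 2^n * x" by simp
  ultimately have "2^(Suc n) * (x/2) \<in> Ztau" by simp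
  thus ?thesis unfolding Rring_iff by (rule exI[of _ "Suc n"])
qed
lemma Rring_sum: "finite S \<Longrightarrow> (\<And>i. i \<in> S \<Longrightarrow> f i \<in> Rring) \<Longrightarrow> sum f S \<in> Rring"
  by (induction S rule: finite_induct) (auto intro: Rring_add Ztau_Rring)

definition UU :: "(real^'n) set" where "UU = {x. x \<bullet> x = 1 \<and> (\<forall>i. x $ i \<in> Rring)}"

lemma inner_Rring: "(\<forall>i. x $ i \<in> Rring) \<Longrightarrow> (\<forall>i. y $ i \<in> Rring) \<Longrightarrow> (x::real^'n) \<bullet> y \<in> Rring"
  unfolding inner_vec_def by (auto intro!: Rring_sum Rring_mult)

lemma refl_refl: "a \<bullet> a = 1 \<Longrightarrow> refl a (refl a x) = x"
  by (simp add: refl_def inner_diff_left algebra_simps)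

lemma refl_norm: "a \<bullet> a = 1 \<Longrightarrow> refl a x \<bullet> refl a x = x \<bullet> x"
  by (simp add: refl_def inner_diff_left inner_diff_right algebra_simps inner_commute power2_eq_square)

lemma refl_UU: "a \<in> UU \<Longrightarrow> x \<in> UU \<Longrightarrow> refl a x \<in> UU"
proof -
  assume a: "a \<in> UU" and x: "x \<in> UU"
  have "x \<bullet> a \<in> Rring" using a x unfolding UU_def by (auto intro: inner_Rring)
  hence "\<forall>i. (refl a x) $ i \<in> Rring" using a x unfolding UU_def refl_def
    by (auto intro!: Rring_diff Rring_mult Rring_add)
  moreover have "refl a x \<bullet> refl a x = 1" using a x refl_norm[of a x] unfolding UU_def by simp
  ultimately show ?thesis unfolding UU_def by simp
qed

lemma refl_bij: "a \<bullet> a = 1 \<Longrightarrow> bij (refl a)"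
  by (rule o_bij[of "refl a"]) (auto simp: refl_refl fun_eq_iff)

lemma group_bij: "h \<in> refl_group A \<Longrightarrow> (\<And>a. a \<in> A \<Longrightarrow> a \<bullet> a = 1) \<Longrightarrow> bij h"
  by (induction rule: refl_group.induct) (auto intro: refl_bij bij_comp bij_imp_bij_inv)

lemma group_UU:
  fixes A :: "(real^'n) set"
  shows "h \<in> refl_group A \<Longrightarrow> A \<subseteq> UU \<Longrightarrow> h ` UU = UU"
proof (induction rule: refl_group.induct)
  case idI thus ?case by simp
next
  case (genI a)
  hence a: "a \<in> UU" by auto
  hence aa: "a \<bullet> a = 1" unfolding UU_def by simp
  show ?case
  proof
    show "refl a ` UU \<subseteq> UU" using a refl_UU by auto
    show "UU \<subseteq> refl a ` UU"
    proof
      fix u :: "real^'n" assume "u \<in> UU"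
      hence "refl a u \<in> UU" using a refl_UU by auto
      moreover have "u = refl a (refl a u)" using refl_refl[OF aa] by simp
      ultimately show "u \<in> refl a ` UU" by blast
    qed
  qed
next
  case (compI g h) thus ?case by (metis image_comp)
next
  case (invI h)
  have "bij h" using group_bij[OF invI.hyps] invI.prems unfolding UU_def by auto
  hence "inv h ` (h ` UU) = UU" by (simp add: bij_is_inj image_inv_f_f)
  thus ?case using invI by simp
qed

lemma orbit_UU: "A \<subseteq> UU \<Longrightarrow> refl_orbit A \<subseteq> UU"
  unfolding refl_orbit_def using group_UU by blast

lemma orbit_base: "a \<in> A \<Longrightarrow> a \<in> refl_orbit A"
  unfolding refl_orbit_def by (auto intro!: exI[of _ id] refl_group.idI)

lemma orbit_back: "a \<in> A \<Longrightarrow> a \<bullet> a = 1 \<Longrightarrow> refl a x \<in> refl_orbit A \<Longrightarrow> x \<in> refl_orbit A"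
proof -
  assume a: "a \<in> A" "a \<bullet> a = 1" "refl a x \<in> refl_orbit A"
  then obtain h b where "refl a x = h b" "h \<in> refl_group A" "b \<in> A" unfolding refl_orbit_def by auto
  hence "x = (refl a \<circ> h) b" "refl a \<circ> h \<in> refl_group A"
    using refl_refl[OF a(2), of x] by (auto intro: refl_group.intros a(1))
  thus ?thesis using \<open>b \<in> A\<close> unfolding refl_orbit_def by blast
qed


lemma tau'_alt: "tau' = 1 - tau" by (simp add: tau_def tau'_def field_simps)
lemma tau_sq2: "tau^2 = tau + 1" using tau_sq by (simp add: power2_eq_square)
lemma tau'_sq2: "tau'^2 = tau' + 1" unfolding tau'_alt using tau_sq by (simp add: power2_eq_square algebra_simps)
lemma tau_sum_sq: "tau^2 + tau'^2 = 3" "tau'^2 + tau^2 = 3"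
  using tau_sq2 tau'_sq2 tau'_alt by simp_all

lemma Rring_tau[simp]: "tau \<in> Rring" "tau' \<in> Rring" by (simp_all add: Ztau_Rring)

lemma pm1: "s \<in> {-1,1::real} \<Longrightarrow> s * s = 1" by auto
lemma Rring_m1[simp]: "- 1 \<in> Rring" using Rring_uminus[OF Rring_1] .
lemma pm1R: "s \<in> {-1,1::real} \<Longrightarrow> s \<in> Rring" by auto

lemma Delta_gen_UU:
  assumes t: "t \<in> Rring" "t' \<in> Rring" "t^2 + t'^2 = 3"
  shows "Delta_gen t t' \<subseteq> UU"
proof
  fix v assume "v \<in> Delta_gen t t'"
  then consider (ax) s i where "v = s *\<^sub>R axis i 1" "s \<in> {-1,1}"
    | (h) a b c d where "v = vector [a/2, b/2, c/2, d/2]" "a \<in> {-1,1}" "b \<in> {-1,1}" "c \<in> {-1,1}" "d \<in> {-1,1}"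
    | (p) p b c d where "v = perm_vec p (vector [0, b/2, c * t' / 2, d * t / 2])" "p permutes (UNIV :: 4 set)"
       "b \<in> {-1,1}" "c \<in> {-1,1}" "d \<in> {-1,1}"
    unfolding Delta_gen_def by blast
  then show "v \<in> UU"
  proof cases
    case ax
    have "v \<bullet> v = s * s" using ax by (simp add: inner_axis_axis)
    moreover have "\<forall>j. v $ j \<in> Rring" using ax by (auto simp: axis_def)
    ultimately show ?thesis using pm1[OF ax(2)] unfolding UU_def by simp
  next
    case h
    have "v \<bullet> v = (a*a + b*b + c*c + d*d) / 4" using h(1) by (simp add: inner4 field_simps)
    hence "v \<bullet> v = 1" using pm1[OF h(2)] pm1[OF h(3)] pm1[OF h(4)] pm1[OF h(5)] by simp
    moreover have "\<forall>j. v $ j \<in> Rring" using h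
      by (auto simp: forall_4 intro!: Rring_half)
    ultimately show ?thesis unfolding UU_def by simp
  next
    case p
    define w :: "real^4" where "w = vector [0, b/2, c * t' / 2, d * t / 2]"
    have "w \<bullet> w = (b*b + (c*c) * t^2 + (d*d)*t'^2)/4 - (c*c) * t^2/4 + (c*c)*t'^2/4 - (d*d)*t'^2/4 + (d*d)*t^2/4"
      unfolding w_def by (simp add: inner4 field_simps power2_eq_square)
    hence "w \<bullet> w = 1" using pm1[OF p(3)] pm1[OF p(4)] pm1[OF p(5)] t(3) by simp
    moreover have "v \<bullet> v = w \<bullet> w"
    proof -
      have "v \<bullet> v = (\<Sum>i\<in>UNIV. w $ p i * w $ p i)" using p(1) unfolding w_def perm_vec_def inner_vec_def by simp
      also have "\<dots> = (\<Sum>i\<in>UNIV. w $ i * w $ i)"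
        using sum.permute[OF p(2), of "\<lambda>i. w $ i * w $ i"] by (simp add: o_def)
      finally show ?thesis by (simp add: inner_vec_def)
    qed
    moreover have "\<forall>j. w $ j \<in> Rring" unfolding w_def using p t
      by (auto simp: forall_4 intro!: Rring_half Rring_mult)
    hence "\<forall>j. v $ j \<in> Rring" using p(1) unfolding w_def perm_vec_def by simp
    ultimately show ?thesis unfolding UU_def by simp
  qed
qed

lemma Delta_UU: "Delta \<union> Delta' \<subseteq> UU"
  unfolding Delta_def Delta'_def using Delta_gen_UU tau_sum_sq by simp

lemma embV_UU: "embV y \<in> UU \<longleftrightarrow> y \<in> UU"
  unfolding UU_def by (auto simp: forall_4 forall_3 embV_inner)

lemma Delta3_UU: "Delta3 \<union> Delta3' \<subseteq> UU"
  using Delta_UU embV_UU unfolding Delta3_def Delta3'_def by auto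

lemma Sigma4_UU: "Sigma4 \<subseteq> UU"
  unfolding Sigma4_def by (rule orbit_UU[OF Delta_UU])
lemma Sigma3_UU: "Sigma3 \<subseteq> UU"
  unfolding Sigma3_def by (rule orbit_UU[OF Delta3_UU])

lemma transfer:
  "h \<in> refl_group (Delta3 \<union> Delta3') \<Longrightarrow> \<exists>h' \<in> refl_group (Delta \<union> Delta'). \<forall>x. h' (embV x) = embV (h x)"
proof (induction rule: refl_group.induct)
  case idI show ?case by (auto intro!: bexI[of _ id] refl_group.idI)
next
  case (genI a)
  hence "embV a \<in> Delta \<union> Delta'" unfolding Delta3_def Delta3'_def by auto
  thus ?case using refl_embV by (auto intro!: bexI[of _ "refl (embV a)"] refl_group.genI)
next
  case (compI g h)
  then obtain g' h' where "g' \<in> refl_group (Delta \<union> Delta')" "h' \<in> refl_group (Delta \<union> Delta')"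
    "\<forall>x. g' (embV x) = embV (g x)" "\<forall>x. h' (embV x) = embV (h x)" by blast
  thus ?case by (auto intro!: bexI[of _ "g' \<circ> h'"] refl_group.compI)
next
  case (invI h)
  then obtain h' where h': "h' \<in> refl_group (Delta \<union> Delta')" "\<forall>x. h' (embV x) = embV (h x)" by blast
  have "bij h" using group_bij[OF invI.hyps] Delta3_UU unfolding UU_def by auto
  have "bij h'" using group_bij[OF h'(1)] Delta_UU unfolding UU_def by auto
  have "inv h' (embV x) = embV (inv h x)" for x
  proof -
    have "h' (embV (inv h x)) = embV x" using h'(2) \<open>bij h\<close> by (simp add: bij_is_surj surj_f_inv_f)
    hence "inv h' (h' (embV (inv h x))) = inv h' (embV x)" by simp
    thus ?thesis using \<open>bij h'\<close> by (simp add: bij_is_inj inv_f_f)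
  qed
  thus ?case using h'(1) by (auto intro!: bexI[of _ "inv h'"] refl_group.invI)
qed

lemma Sigma3_Sigma4: "y \<in> Sigma3 \<Longrightarrow> embV y \<in> Sigma4"
proof -
  assume "y \<in> Sigma3"
  then obtain h a where "y = h a" "h \<in> refl_group (Delta3 \<union> Delta3')" "a \<in> Delta3 \<union> Delta3'"
    unfolding Sigma3_def refl_orbit_def by auto
  moreover obtain h' where "h' \<in> refl_group (Delta \<union> Delta')" "\<forall>x. h' (embV x) = embV (h x)"
    using transfer[OF \<open>h \<in> _\<close>] by blast
  moreover have "embV a \<in> Delta \<union> Delta'" using \<open>a \<in> _\<close> unfolding Delta3_def Delta3'_def by auto
  ultimately have "embV y = h' (embV a)" "h' \<in> refl_group (Delta \<union> Delta')" "embV a \<in> Delta \<union> Delta'" by auto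
  thus ?thesis unfolding Sigma4_def refl_orbit_def by blast
qed


lemma roots_gen:
  assumes "b \<in> {-1,1}" "c \<in> {-1,1}" "d \<in> {-1,1}"
  shows "embV (vector [b/2, c*t'/2, d*t/2]) \<in> Delta_gen t t'"
    "embV (vector [c*t'/2, d*t/2, b/2]) \<in> Delta_gen t t'"
    "embV (vector [d*t/2, b/2, c*t'/2]) \<in> Delta_gen t t'"
proof -
  let ?w = "vector [0, b/2, c * t' / 2, d * t / 2] :: real^4"
  let ?S = "{perm_vec p (vector [0, b/2, c * t' / 2, d * t / 2]) | p b c d.
        p permutes (UNIV :: 4 set) \<and> evenperm p \<and> b \<in> {-1,1} \<and> c \<in> {-1,1} \<and> d \<in> {-1,1}} :: (real^4) set"
  have S: "?S \<subseteq> Delta_gen t t'" unfolding Delta_gen_def by blast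
  have mem: "perm_vec p ?w \<in> Delta_gen t t'" if "p permutes (UNIV :: 4 set)" "evenperm p" for p
    using that assms S by blast
  have "embV (vector [b/2, c*t'/2, d*t/2]) = perm_vec id ?w"
    by (simp add: vec_eq_iff forall_4 perm_vec_def)
  moreover have "id permutes (UNIV :: 4 set)" "evenperm (id :: 4 \<Rightarrow> 4)"
    by (simp_all add: permutes_id evenperm_id)
  ultimately show "embV (vector [b/2, c*t'/2, d*t/2]) \<in> Delta_gen t t'" using mem by simp
  define p1 :: "4 \<Rightarrow> 4" where "p1 = Transposition.transpose 2 3 \<circ> Transposition.transpose 3 4"
  have "embV (vector [c*t'/2, d*t/2, b/2]) = perm_vec p1 ?w"
    by (simp add: vec_eq_iff forall_4 perm_vec_def p1_def Transposition.transpose_def)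
  moreover have "p1 permutes (UNIV :: 4 set)" unfolding p1_def
    by (intro permutes_compose permutes_swap_id) auto
  moreover have "evenperm p1" unfolding p1_def
    by (simp add: evenperm_comp permutation_swap_id evenperm_swap)
  ultimately show "embV (vector [c*t'/2, d*t/2, b/2]) \<in> Delta_gen t t'" using mem by simp
  define p2 :: "4 \<Rightarrow> 4" where "p2 = Transposition.transpose 3 4 \<circ> Transposition.transpose 2 3"
  have "embV (vector [d*t/2, b/2, c*t'/2]) = perm_vec p2 ?w"
    by (simp add: vec_eq_iff forall_4 perm_vec_def p2_def Transposition.transpose_def)
  moreover have "p2 permutes (UNIV :: 4 set)" unfolding p2_def
    by (intro permutes_compose permutes_swap_id) auto
  moreover have "evenperm p2" unfolding p2_def
    by (simp add: evenperm_comp permutation_swap_id evenperm_swap)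
  ultimately show "embV (vector [d*t/2, b/2, c*t'/2]) \<in> Delta_gen t t'" using mem by simp
qed

lemma axis_Delta3:
  assumes "s \<in> {-1,1}"
  shows "s *\<^sub>R axis (i::3) 1 \<in> Delta3"
proof -
  have S: "{s *\<^sub>R axis i 1 | s i. s \<in> {-1, 1}} \<subseteq> Delta_gen tau tau'" unfolding Delta_gen_def by blast
  have "embV (s *\<^sub>R axis i 1) = s *\<^sub>R axis 2 1 \<or> embV (s *\<^sub>R axis i 1) = s *\<^sub>R axis 3 1 \<or>
        embV (s *\<^sub>R axis i 1) = s *\<^sub>R axis 4 1"
    using exhaust_3[of i] by (auto simp: vec_eq_iff forall_4 axis_def)
  thus ?thesis using S assms unfolding Delta3_def Delta_def by blast
qed

lemma red_1[simp]: "red 1 = (1,0)" by (simp add: zt_1)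
lemma red_tau[simp]: "red tau = (0,1)" by (simp add: zt_tau)
lemma red_tau'[simp]: "red tau' = (1,1)" by (simp add: zt_tau')

definition F3 :: "(int\<times>int) set" where "F3 = {(1,0),(0,1),(1,1)}"

lemma f4_sumsq: "{r1,r2,r3} = F3 \<Longrightarrow> f4add (f4add (f4mul r1 r1) (f4mul r2 r2)) (f4mul r3 r3) = (0,0)"
proof -
  assume h: "{r1,r2,r3} = F3"
  hence "r1 \<in> F3" "r2 \<in> F3" "r3 \<in> F3" "(1,0) \<in> {r1,r2,r3}" "(0,1) \<in> {r1,r2,r3}" "(1,1) \<in> {r1,r2,r3}"
    unfolding F3_def by auto
  hence d: "r1 = (1,0) \<or> r1 = (0,1) \<or> r1 = (1,1)" "r2 = (1,0) \<or> r2 = (0,1) \<or> r2 = (1,1)"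
     "r3 = (1,0) \<or> r3 = (0,1) \<or> r3 = (1,1)" "(1,0) \<in> {r1,r2,r3}" "(0,1) \<in> {r1,r2,r3}" "(1,1) \<in> {r1,r2,r3}"
    unfolding F3_def by auto
  from d(1,2,3) show ?thesis using d(4,5,6) by (elim disjE) (simp_all add: f4add_def f4mul_def)
qed

lemma f4_choice: "r \<in> {0,1} \<times> {0,1} \<Longrightarrow> {r1,r2,r3} = F3 \<Longrightarrow>
   r = (1,0) \<or> f4add r (f4mul r1 r1) = (1,0) \<or> f4add r (f4mul r2 r2) = (1,0) \<or> f4add r (f4mul r3 r3) = (1,0)"
proof -
  assume r: "r \<in> {0,1} \<times> {0,1}" and h: "{r1,r2,r3} = F3"
  hence "r1 \<in> F3" "r2 \<in> F3" "r3 \<in> F3" "(1,0) \<in> {r1,r2,r3}" "(0,1) \<in> {r1,r2,r3}" "(1,1) \<in> {r1,r2,r3}"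
    unfolding F3_def by auto
  hence d: "r1 = (1,0) \<or> r1 = (0,1) \<or> r1 = (1,1)" "r2 = (1,0) \<or> r2 = (0,1) \<or> r2 = (1,1)"
     "r3 = (1,0) \<or> r3 = (0,1) \<or> r3 = (1,1)" "(1,0) \<in> {r1,r2,r3}" "(0,1) \<in> {r1,r2,r3}" "(1,1) \<in> {r1,r2,r3}"
    unfolding F3_def by auto
  have dr: "r = (0,0) \<or> r = (1,0) \<or> r = (0,1) \<or> r = (1,1)" using r by auto
  from dr d(1,2,3) show ?thesis using d(4,5,6) by (elim disjE) (simp_all add: f4add_def f4mul_def)
qed

lemma desc_fin:
  assumes "w \<in> Ztau" "red w = (1,0)" "e \<in> {-1,1}" "y \<in> Ztau" "\<alpha> \<in> Ztau" "red y = red \<alpha>"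
  shows "(y - w*(e*\<alpha>))/2 \<in> Ztau"
proof -
  have ea: "e*\<alpha> \<in> Ztau" "red (e*\<alpha>) = red \<alpha>" using assms(3,5) red_uminus[of \<alpha>] Ztau_uminus[of \<alpha>] by auto
  have "red \<alpha> \<in> {0,1} \<times> {0,1}" using red_range[of \<alpha>] assms(5) by auto
  hence "red (w*(e*\<alpha>)) = red \<alpha>" using red_mult[OF assms(1) ea(1)] ea(2) assms(2)
    by (auto simp: f4mul_def)
  hence "red (y - w*(e*\<alpha>)) = (0,0)"
    using red_diff[OF assms(4) Ztau_mult[OF assms(1) ea(1)]] assms(6) \<open>red \<alpha> \<in> _\<close>
    by (auto simp: f4add_def)
  thus ?thesis using half_Ztau[OF Ztau_diff[OF assms(4) Ztau_mult[OF assms(1) ea(1)]]] by simp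
qed

definition desc_concl where
  "desc_concl y1 y2 y3 \<alpha>1 \<alpha>2 \<alpha>3 \<longleftrightarrow> (\<exists>e1 e2 e3 w. e1 \<in> {-1,1} \<and> e2 \<in> {-1,1} \<and> e3 \<in> {-1,1::real} \<and>
     2*w = e1*y1*\<alpha>1+e2*y2*\<alpha>2+e3*y3*\<alpha>3 \<and> (y1 - w*(e1*\<alpha>1))/2 \<in> Ztau \<and> (y2 - w*(e2*\<alpha>2))/2 \<in> Ztau
     \<and> (y3 - w*(e3*\<alpha>3))/2 \<in> Ztau)"

lemma desc_pick:
  assumes "w \<in> Ztau" "red w = (1,0)" "e1 \<in> {-1,1}" "e2 \<in> {-1,1}" "e3 \<in> {-1,1}"
    "2*w = e1*y1*\<alpha>1+e2*y2*\<alpha>2+e3*y3*\<alpha>3"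
    "y1 \<in> Ztau" "y2 \<in> Ztau" "y3 \<in> Ztau" "\<alpha>1 \<in> Ztau" "\<alpha>2 \<in> Ztau" "\<alpha>3 \<in> Ztau"
    "red y1 = red \<alpha>1" "red y2 = red \<alpha>2" "red y3 = red \<alpha>3"
  shows "desc_concl y1 y2 y3 \<alpha>1 \<alpha>2 \<alpha>3"
  unfolding desc_concl_def using assms desc_fin by blast

lemma desc_core:
  assumes Z: "y1 \<in> Ztau" "y2 \<in> Ztau" "y3 \<in> Ztau" "\<alpha>1 \<in> Ztau" "\<alpha>2 \<in> Ztau" "\<alpha>3 \<in> Ztau"
    and R: "red y1 = red \<alpha>1" "red y2 = red \<alpha>2" "red y3 = red \<alpha>3"
    and F: "{red \<alpha>1, red \<alpha>2, red \<alpha>3} = F3"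
  shows "desc_concl y1 y2 y3 \<alpha>1 \<alpha>2 \<alpha>3"
proof -
  have t: "y1*\<alpha>1 \<in> Ztau" "y2*\<alpha>2 \<in> Ztau" "y3*\<alpha>3 \<in> Ztau" using Z by (auto intro: Ztau_mult)
  have rt: "red (y1*\<alpha>1) = f4mul (red \<alpha>1) (red \<alpha>1)" "red (y2*\<alpha>2) = f4mul (red \<alpha>2) (red \<alpha>2)"
    "red (y3*\<alpha>3) = f4mul (red \<alpha>3) (red \<alpha>3)" using red_mult Z R by auto
  define s where "s = y1*\<alpha>1 + y2*\<alpha>2 + y3*\<alpha>3"
  have sZ: "s \<in> Ztau" unfolding s_def using t by (auto intro: Ztau_add)
  have "red s = (0,0)" unfolding s_def using red_add[OF Ztau_add[OF t(1,2)] t(3)] red_add[OF t(1,2)] rt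
      f4_sumsq[OF F] by simp
  hence w0: "s/2 \<in> Ztau" using half_Ztau[OF sZ] by simp
  have rr: "red (s/2) \<in> {0,1} \<times> {0,1}" using red_range[of "s/2"] w0 by auto
  have pm: "(1::real) \<in> {-1,1}" "(-1::real) \<in> {-1,1}" by auto
  from f4_choice[OF rr F] consider "red (s/2) = (1,0)"
    | "f4add (red (s/2)) (f4mul (red \<alpha>1) (red \<alpha>1)) = (1,0)"
    | "f4add (red (s/2)) (f4mul (red \<alpha>2) (red \<alpha>2)) = (1,0)"
    | "f4add (red (s/2)) (f4mul (red \<alpha>3) (red \<alpha>3)) = (1,0)" by blast
  thus ?thesis
  proof cases
    case 1
    show ?thesis by (rule desc_pick[OF w0 1 pm(1) pm(1) pm(1) _ Z R]) (simp add: s_def)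
  next
    case 2
    have "red (s/2 - y1*\<alpha>1) = (1,0)" using red_diff[OF w0 t(1)] rt 2 by simp
    show ?thesis by (rule desc_pick[OF Ztau_diff[OF w0 t(1)] \<open>red (s/2 - y1*\<alpha>1) = (1,0)\<close> pm(2) pm(1) pm(1) _ Z R])
      (simp add: s_def field_simps)
  next
    case 3
    have "red (s/2 - y2*\<alpha>2) = (1,0)" using red_diff[OF w0 t(2)] rt 3 by simp
    show ?thesis by (rule desc_pick[OF Ztau_diff[OF w0 t(2)] \<open>red (s/2 - y2*\<alpha>2) = (1,0)\<close> pm(1) pm(2) pm(1) _ Z R])
      (simp add: s_def field_simps)
  next
    case 4
    have "red (s/2 - y3*\<alpha>3) = (1,0)" using red_diff[OF w0 t(3)] rt 4 by simp
    show ?thesis by (rule desc_pick[OF Ztau_diff[OF w0 t(3)] \<open>red (s/2 - y3*\<alpha>3) = (1,0)\<close> pm(1) pm(1) pm(2) _ Z R])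
      (simp add: s_def field_simps)
  qed
qed

lemma rootsD3:
  assumes "b \<in> {-1,1}" "c \<in> {-1,1}" "d \<in> {-1,1}"
  shows "vector [b/2, c*tau'/2, d*tau/2] \<in> Delta3 \<union> Delta3'"
    "vector [c*tau'/2, d*tau/2, b/2] \<in> Delta3 \<union> Delta3'"
    "vector [d*tau/2, b/2, c*tau'/2] \<in> Delta3 \<union> Delta3'"
    "vector [b/2, c*tau/2, d*tau'/2] \<in> Delta3 \<union> Delta3'"
    "vector [c*tau/2, d*tau'/2, b/2] \<in> Delta3 \<union> Delta3'"
    "vector [d*tau'/2, b/2, c*tau/2] \<in> Delta3 \<union> Delta3'"
  using roots_gen[OF assms, of tau' tau] roots_gen[OF assms, of tau tau']
  unfolding Delta3_def Delta3'_def Delta_def Delta'_def by auto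

definition alpha_ok where
  "alpha_ok r1 r2 r3 \<alpha>1 \<alpha>2 \<alpha>3 \<longleftrightarrow> \<alpha>1 \<in> Ztau \<and> \<alpha>2 \<in> Ztau \<and> \<alpha>3 \<in> Ztau \<and> red \<alpha>1 = r1 \<and> red \<alpha>2 = r2 \<and> red \<alpha>3 = r3
    \<and> {r1,r2,r3} = F3 \<and> (\<forall>e1 e2 e3. e1 \<in> {-1,1} \<longrightarrow> e2 \<in> {-1,1} \<longrightarrow> e3 \<in> {-1,1} \<longrightarrow>
         vector [e1*\<alpha>1/2, e2*\<alpha>2/2, e3*\<alpha>3/2] \<in> Delta3 \<union> Delta3')"

lemma F3_perms: "{(1,0),(1,1),(0,1)} = F3" "{(1,1),(0,1),(1,0)} = F3" "{(0,1),(1,0),(1,1)} = F3"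
  "{(1,0),(0,1),(1,1)} = F3" "{(0,1),(1,1),(1,0)} = F3" "{(1,1),(1,0),(0,1)} = (F3 :: (int\<times>int) set)"
  unfolding F3_def by auto

lemma alpha_okI:
  assumes "\<alpha>1 \<in> Ztau" "\<alpha>2 \<in> Ztau" "\<alpha>3 \<in> Ztau" "red \<alpha>1 = r1" "red \<alpha>2 = r2" "red \<alpha>3 = r3"
    "{r1,r2,r3} = F3" "\<And>e1 e2 e3. e1 \<in> {-1,1} \<Longrightarrow> e2 \<in> {-1,1} \<Longrightarrow> e3 \<in> {-1,1} \<Longrightarrow>
         vector [e1*\<alpha>1/2, e2*\<alpha>2/2, e3*\<alpha>3/2] \<in> Delta3 \<union> Delta3'"
  shows "\<exists>\<alpha>1 \<alpha>2 \<alpha>3. alpha_ok r1 r2 r3 \<alpha>1 \<alpha>2 \<alpha>3"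
  unfolding alpha_ok_def using assms by blast

lemma P6_alpha:
  assumes "(r1,r2,r3) \<in> P6"
  shows "\<exists>\<alpha>1 \<alpha>2 \<alpha>3. alpha_ok r1 r2 r3 \<alpha>1 \<alpha>2 \<alpha>3"
proof -
  from assms consider "(r1,r2,r3) = ((1,0),(1,1),(0,1))" | "(r1,r2,r3) = ((1,1),(0,1),(1,0))"
    | "(r1,r2,r3) = ((0,1),(1,0),(1,1))" | "(r1,r2,r3) = ((1,0),(0,1),(1,1))"
    | "(r1,r2,r3) = ((0,1),(1,1),(1,0))" | "(r1,r2,r3) = ((1,1),(1,0),(0,1))"
    unfolding P6_def by blast
  thus ?thesis
  proof cases
    case 1 show ?thesis
      by (rule alpha_okI[of 1 tau' tau]) (use 1 F3_perms rootsD3(1) in simp_all)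
  next
    case 2 show ?thesis
      by (rule alpha_okI[of tau' tau 1]) (use 2 F3_perms rootsD3(2) in simp_all)
  next
    case 3 show ?thesis
      by (rule alpha_okI[of tau 1 tau']) (use 3 F3_perms rootsD3(3) in simp_all)
  next
    case 4 show ?thesis
      by (rule alpha_okI[of 1 tau tau']) (use 4 F3_perms rootsD3(4) in simp_all)
  next
    case 5 show ?thesis
      by (rule alpha_okI[of tau tau' 1]) (use 5 F3_perms rootsD3(5) in simp_all)
  next
    case 6 show ?thesis
      by (rule alpha_okI[of tau' 1 tau]) (use 6 F3_perms rootsD3(6) in simp_all)
  qed
qed


lemma descent:
  fixes x :: "real^3"
  assumes xU: "x \<in> UU" and xi: "\<forall>i. 2^(Suc m) * x$i \<in> Ztau"
    and P: "(red (2^(Suc m) * x$1), red (2^(Suc m) * x$2), red (2^(Suc m) * x$3)) \<in> P6"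
  shows "\<exists>a \<in> Delta3 \<union> Delta3'. \<forall>i. 2^m * (refl a x)$i \<in> Ztau"
proof -
  define y1 where "y1 = 2^(Suc m) * x$1"
  define y2 where "y2 = 2^(Suc m) * x$2"
  define y3 where "y3 = 2^(Suc m) * x$3"
  have Y: "y1 \<in> Ztau" "y2 \<in> Ztau" "y3 \<in> Ztau" using xi unfolding y1_def y2_def y3_def by auto
  obtain \<alpha>1 \<alpha>2 \<alpha>3 where al: "alpha_ok (red y1) (red y2) (red y3) \<alpha>1 \<alpha>2 \<alpha>3"
    using P6_alpha[OF P[folded y1_def y2_def y3_def]] by blast
  hence Z: "\<alpha>1 \<in> Ztau" "\<alpha>2 \<in> Ztau" "\<alpha>3 \<in> Ztau" and R: "red y1 = red \<alpha>1" "red y2 = red \<alpha>2" "red y3 = red \<alpha>3"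
    and F: "{red \<alpha>1, red \<alpha>2, red \<alpha>3} = F3" unfolding alpha_ok_def by auto
  from desc_core[OF Y Z R F] obtain e1 e2 e3 w where
    e: "e1 \<in> {-1,1}" "e2 \<in> {-1,1}" "e3 \<in> {-1,1::real}" and
    w: "2*w = e1*y1*\<alpha>1+e2*y2*\<alpha>2+e3*y3*\<alpha>3" and
    z: "(y1 - w*(e1*\<alpha>1))/2 \<in> Ztau" "(y2 - w*(e2*\<alpha>2))/2 \<in> Ztau" "(y3 - w*(e3*\<alpha>3))/2 \<in> Ztau"
    unfolding desc_concl_def by blast
  define a :: "real^3" where "a = vector [e1*\<alpha>1/2, e2*\<alpha>2/2, e3*\<alpha>3/2]"
  have aD: "a \<in> Delta3 \<union> Delta3'" using al e unfolding alpha_ok_def a_def by blast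
  have x: "x$1 = y1 / 2^(Suc m)" "x$2 = y2 / 2^(Suc m)" "x$3 = y3 / 2^(Suc m)"
    unfolding y1_def y2_def y3_def by simp_all
  have "x \<bullet> a = (e1*y1*\<alpha>1+e2*y2*\<alpha>2+e3*y3*\<alpha>3) / (2 * 2^(Suc m))"
    unfolding inner3 a_def x by (simp add: field_simps)
  hence xa: "x \<bullet> a = w / 2^(Suc m)" unfolding w[symmetric] by simp
  have c: "2^m * (refl a x)$i = 2^m * x$i - w * (2 * a$i) / 2" for i
    unfolding refl_def xa by (simp add: field_simps)
  have eqs: "2^m * (refl a x)$1 = (y1 - w*(e1*\<alpha>1))/2" "2^m * (refl a x)$2 = (y2 - w*(e2*\<alpha>2))/2"
    "2^m * (refl a x)$3 = (y3 - w*(e3*\<alpha>3))/2"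
    unfolding c by (simp_all add: a_def y1_def y2_def y3_def field_simps)
  have "\<forall>i. 2^m * (refl a x)$i \<in> Ztau" unfolding forall_3 eqs using z by blast
  thus ?thesis using aD by blast
qed

lemma sq_sum_pow:
  fixes x :: "real^3"
  assumes "x \<bullet> x = 1"
  shows "(2^N * x$1) * (2^N * x$1) + (2^N * x$2) * (2^N * x$2) + (2^N * x$3) * (2^N * x$3) = 4^N"
proof -
  have "(2^N * x$1) * (2^N * x$1) + (2^N * x$2) * (2^N * x$2) + (2^N * x$3) * (2^N * x$3)
      = (2^N * 2^N) * (x \<bullet> x)" by (simp add: inner3 algebra_simps)
  also have "(2::real)^N * 2^N = 4^N" by (simp add: power_mult_distrib[symmetric])
  finally show ?thesis using assms by simp
qed

lemma base_case:
  fixes x :: "real^3"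
  assumes "x \<in> UU" "\<forall>i. x$i \<in> Ztau"
  shows "\<exists>s i. s \<in> {-1,1} \<and> x = s *\<^sub>R axis i 1"
proof -
  have "x \<bullet> x = 1" using assms(1) unfolding UU_def by simp
  hence "x$1*x$1 + x$2*x$2 + x$3*x$3 = 1" by (simp add: inner3)
  from zero_case[OF _ _ _ this] assms(2)
  have "(x$1,x$2,x$3) \<in> {(1,0,0),(-1,0,0),(0,1,0),(0,-1,0),(0,0,1),(0,0,-1)}" by simp
  hence "x = 1 *\<^sub>R axis 1 1 \<or> x = (-1) *\<^sub>R axis 1 1 \<or> x = 1 *\<^sub>R axis 2 1 \<or> x = (-1) *\<^sub>R axis 2 1 \<or>
    x = 1 *\<^sub>R axis 3 1 \<or> x = (-1) *\<^sub>R axis 3 1"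
    by (auto simp: vec_eq_iff forall_3 axis_def)
  thus ?thesis by blast
qed

lemma UU_Sigma3_aux:
  "\<forall>x::real^3. x \<in> UU \<and> (\<forall>i. 2^N * x$i \<in> Ztau) \<longrightarrow> x \<in> Sigma3"
proof (induction N)
  case 0
  show ?case
  proof (intro allI impI)
    fix x :: "real^3" assume h: "x \<in> UU \<and> (\<forall>i. 2^0 * x$i \<in> Ztau)"
    have "\<exists>s i. s \<in> {-1,1} \<and> x = s *\<^sub>R axis i 1" using base_case[of x] h by simp
    then obtain s i where "s \<in> {-1,1}" "x = s *\<^sub>R axis i 1" by blast
    hence "x \<in> Delta3" using axis_Delta3 by simp
    thus "x \<in> Sigma3" unfolding Sigma3_def by (auto intro: orbit_base)
  qed
next
  case (Suc m)
  show ?case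
  proof (intro allI impI)
    fix x :: "real^3" assume h: "x \<in> UU \<and> (\<forall>i. 2^(Suc m) * x$i \<in> Ztau)"
    show "x \<in> Sigma3"
    proof (cases "\<forall>i. 2^m * x$i \<in> Ztau")
      case True thus ?thesis using Suc h by blast
    next
      case False
      have xx: "x \<bullet> x = 1" using h unfolding UU_def by simp
      have hv: "(2^(Suc m) * x$i)/2 = 2^m * x$i" for i by simp
      have "\<not> ((2^(Suc m) * x$1)/2 \<in> Ztau \<and> (2^(Suc m) * x$2)/2 \<in> Ztau \<and> (2^(Suc m) * x$3)/2 \<in> Ztau)"
        using False unfolding hv by (simp add: forall_3)
      from pattern[OF _ _ _ sq_sum_pow[OF xx] _ this] h
      have P: "(red (2^(Suc m) * x$1), red (2^(Suc m) * x$2), red (2^(Suc m) * x$3)) \<in> P6" by simp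
      from descent[OF _ _ P] h obtain a where a: "a \<in> Delta3 \<union> Delta3'" "\<forall>i. 2^m * (refl a x)$i \<in> Ztau"
        by blast
      have aU: "a \<in> UU" using a(1) Delta3_UU by auto
      have "refl a x \<in> UU" using refl_UU[OF aU] h by simp
      hence "refl a x \<in> Sigma3" using Suc a(2) by blast
      moreover have "a \<bullet> a = 1" using aU unfolding UU_def by simp
      ultimately show ?thesis unfolding Sigma3_def using orbit_back[OF a(1)] by blast
    qed
  qed
qed

lemma Sn_gen_memI:
  assumes "N \<noteq> 0" "\<forall>i. 2^N * x$i \<in> Ztau" "x \<bullet> x = 1" "(a,b,c) \<in> {(1,t',t),(t',t,1),(t,1,t')}"
    "cong2 (2^N * x$1) a \<and> cong2 (2^N * x$2) b \<and> cong2 (2^N * x$3) c"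
  shows "x \<in> Sn_gen t t' N"
proof -
  have "Sn_gen t t' N = {x. (\<forall>i. 2 ^ N * x $ i \<in> Ztau) \<and> x \<bullet> x = 1 \<and>
         (\<exists>(a, b, c) \<in> {(1, t', t), (t', t, 1), (t, 1, t')}.
            cong2 (2 ^ N * x $ 1) a \<and> cong2 (2 ^ N * x $ 2) b \<and> cong2 (2 ^ N * x $ 3) c)}"
    using assms(1) unfolding Sn_gen_def by simp
  moreover have "\<exists>(a, b, c) \<in> {(1, t', t), (t', t, 1), (t, 1, t')}.
            cong2 (2 ^ N * x $ 1) a \<and> cong2 (2 ^ N * x $ 2) b \<and> cong2 (2 ^ N * x $ 3) c"
    using assms(4,5) by blast
  ultimately show ?thesis using assms(2,3) by simp
qed

lemma P6_Sn:
  fixes x :: "real^3"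
  assumes "x \<bullet> x = 1" "\<forall>i. 2^N * x$i \<in> Ztau" "N \<noteq> 0"
    and P: "(red (2^N * x$1), red (2^N * x$2), red (2^N * x$3)) \<in> P6"
  shows "x \<in> Sn N \<union> Sn' N"
proof -
  have Y: "2^N * x$1 \<in> Ztau" "2^N * x$2 \<in> Ztau" "2^N * x$3 \<in> Ztau" using assms(2) by auto
  from P consider
      "(red (2^N * x$1), red (2^N * x$2), red (2^N * x$3)) = (red 1, red tau', red tau)"
    | "(red (2^N * x$1), red (2^N * x$2), red (2^N * x$3)) = (red tau', red tau, red 1)"
    | "(red (2^N * x$1), red (2^N * x$2), red (2^N * x$3)) = (red tau, red 1, red tau')"
    | "(red (2^N * x$1), red (2^N * x$2), red (2^N * x$3)) = (red 1, red tau, red tau')"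
    | "(red (2^N * x$1), red (2^N * x$2), red (2^N * x$3)) = (red tau, red tau', red 1)"
    | "(red (2^N * x$1), red (2^N * x$2), red (2^N * x$3)) = (red tau', red 1, red tau)"
    unfolding P6_def by auto
  thus ?thesis
  proof cases
    case 1
    hence "(1, tau', tau) \<in> {(1, tau', tau), (tau', tau, 1), (tau, 1, tau')}"
      "cong2 (2 ^ N * x $ 1) 1 \<and> cong2 (2 ^ N * x $ 2) tau' \<and> cong2 (2 ^ N * x $ 3) tau"
      using Y by (auto simp: cong2_red)
    thus ?thesis using assms Sn_gen_memI[of N x] unfolding Sn_def by blast
  next
    case 2
    hence "(tau', tau, 1) \<in> {(1, tau', tau), (tau', tau, 1), (tau, 1, tau')}"
      "cong2 (2 ^ N * x $ 1) tau' \<and> cong2 (2 ^ N * x $ 2) tau \<and> cong2 (2 ^ N * x $ 3) 1"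
      using Y by (auto simp: cong2_red)
    thus ?thesis using assms Sn_gen_memI[of N x] unfolding Sn_def by blast
  next
    case 3
    hence "(tau, 1, tau') \<in> {(1, tau', tau), (tau', tau, 1), (tau, 1, tau')}"
      "cong2 (2 ^ N * x $ 1) tau \<and> cong2 (2 ^ N * x $ 2) 1 \<and> cong2 (2 ^ N * x $ 3) tau'"
      using Y by (auto simp: cong2_red)
    thus ?thesis using assms Sn_gen_memI[of N x] unfolding Sn_def by blast
  next
    case 4
    hence "(1, tau, tau') \<in> {(1, tau, tau'), (tau, tau', 1), (tau', 1, tau)}"
      "cong2 (2 ^ N * x $ 1) 1 \<and> cong2 (2 ^ N * x $ 2) tau \<and> cong2 (2 ^ N * x $ 3) tau'"
      using Y by (auto simp: cong2_red)
    thus ?thesis using assms Sn_gen_memI[of N x] unfolding Sn'_def by blast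
  next
    case 5
    hence "(tau, tau', 1) \<in> {(1, tau, tau'), (tau, tau', 1), (tau', 1, tau)}"
      "cong2 (2 ^ N * x $ 1) tau \<and> cong2 (2 ^ N * x $ 2) tau' \<and> cong2 (2 ^ N * x $ 3) 1"
      using Y by (auto simp: cong2_red)
    thus ?thesis using assms Sn_gen_memI[of N x] unfolding Sn'_def by blast
  next
    case 6
    hence "(tau', 1, tau) \<in> {(1, tau, tau'), (tau, tau', 1), (tau', 1, tau)}"
      "cong2 (2 ^ N * x $ 1) tau' \<and> cong2 (2 ^ N * x $ 2) 1 \<and> cong2 (2 ^ N * x $ 3) tau"
      using Y by (auto simp: cong2_red)
    thus ?thesis using assms Sn_gen_memI[of N x] unfolding Sn'_def by blast
  qed
qed

lemma S0_Sn: "S0 \<subseteq> Sn 0" "S0 \<subseteq> Sn' 0" by (simp_all add: Sn_def Sn'_def Sn_gen_def)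

lemma UU_Sn_aux:
  "\<forall>x::real^3. x \<in> UU \<and> (\<forall>i. 2^N * x$i \<in> Ztau) \<longrightarrow> x \<in> (\<Union>n. Sn n \<union> Sn' n)"
proof (induction N)
  case 0
  show ?case
  proof (intro allI impI)
    fix x :: "real^3" assume h: "x \<in> UU \<and> (\<forall>i. 2^0 * x$i \<in> Ztau)"
    have "\<exists>s i. s \<in> {-1,1} \<and> x = s *\<^sub>R axis i 1" using base_case[of x] h by simp
    hence "x \<in> S0" unfolding S0_def by blast
    thus "x \<in> (\<Union>n. Sn n \<union> Sn' n)" using S0_Sn by blast
  qed
next
  case (Suc m)
  show ?case
  proof (intro allI impI)
    fix x :: "real^3" assume h: "x \<in> UU \<and> (\<forall>i. 2^(Suc m) * x$i \<in> Ztau)"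
    show "x \<in> (\<Union>n. Sn n \<union> Sn' n)"
    proof (cases "\<forall>i. 2^m * x$i \<in> Ztau")
      case True thus ?thesis using Suc h by blast
    next
      case False
      have xx: "x \<bullet> x = 1" using h unfolding UU_def by simp
      have hv: "(2^(Suc m) * x$i)/2 = 2^m * x$i" for i by simp
      have "\<not> ((2^(Suc m) * x$1)/2 \<in> Ztau \<and> (2^(Suc m) * x$2)/2 \<in> Ztau \<and> (2^(Suc m) * x$3)/2 \<in> Ztau)"
        using False unfolding hv by (simp add: forall_3)
      from pattern[OF _ _ _ sq_sum_pow[OF xx] _ this] h
      have P: "(red (2^(Suc m) * x$1), red (2^(Suc m) * x$2), red (2^(Suc m) * x$3)) \<in> P6" by simp
      from P6_Sn[OF xx _ _ P] h show ?thesis by blast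
    qed
  qed
qed

lemma UU_exN: "(x::real^3) \<in> UU \<Longrightarrow> \<exists>N. \<forall>i. 2^N * x$i \<in> Ztau"
proof -
  assume "x \<in> UU"
  hence "x$1 \<in> Rring" "x$2 \<in> Rring" "x$3 \<in> Rring" unfolding UU_def by auto
  then obtain n1 n2 n3 where "2^n1 * x$1 \<in> Ztau" "2^n2 * x$2 \<in> Ztau" "2^n3 * x$3 \<in> Ztau"
    unfolding Rring_iff by blast
  hence "2^(n1+n2+n3) * x$1 \<in> Ztau" "2^(n1+n2+n3) * x$2 \<in> Ztau" "2^(n1+n2+n3) * x$3 \<in> Ztau"
    by (auto elim: Ztau_shift)
  thus ?thesis by (auto simp: forall_3)
qed

lemma UU_Sigma3: "UU \<subseteq> Sigma3"
proof
  fix x :: "real^3" assume x: "x \<in> UU"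
  then obtain N where "\<forall>i. 2^N * x$i \<in> Ztau" using UU_exN by blast
  with x show "x \<in> Sigma3" using UU_Sigma3_aux[of N] by blast
qed
lemma UU_Sn: "UU \<subseteq> (\<Union>n. Sn n \<union> Sn' n)"
proof
  fix x :: "real^3" assume x: "x \<in> UU"
  then obtain N where "\<forall>i. 2^N * x$i \<in> Ztau" using UU_exN by blast
  with x show "x \<in> (\<Union>n. Sn n \<union> Sn' n)" using UU_Sn_aux[of N] by blast
qed

lemma S0_UU: "S0 \<subseteq> UU"
proof
  fix v :: "real^3" assume "v \<in> S0"
  then obtain s i where ax: "v = s *\<^sub>R axis i 1" "s \<in> {-1,1}" unfolding S0_def by blast
  have "v \<bullet> v = s * s" using ax by (simp add: inner_axis_axis)
  moreover have "\<forall>j. v $ j \<in> Rring" using ax by (auto simp: axis_def)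
  ultimately show "v \<in> UU" using pm1[OF ax(2)] unfolding UU_def by simp
qed

lemma Sn_gen_UU: "Sn_gen t t' n \<subseteq> UU"
proof (cases "n = 0")
  case True thus ?thesis using S0_UU by (simp add: Sn_gen_def)
next
  case False
  show ?thesis
  proof
    fix x assume "x \<in> Sn_gen t t' n"
    hence "x \<bullet> x = 1" "\<forall>i. 2^n * x$i \<in> Ztau" using False unfolding Sn_gen_def by auto
    thus "x \<in> UU" unfolding UU_def Rring_iff by blast
  qed
qed

lemma Sn_UU: "(\<Union>n. Sn n \<union> Sn' n) \<subseteq> UU"
  unfolding Sn_def Sn'_def using Sn_gen_UU by blast

theorem mainTheorem8:
  shows "Sigma3 = (\<Union>n. Sn n \<union> Sn' n)
    \<and> (\<Union>n. Sn n \<union> Sn' n) = {x :: real^3. x \<bullet> x = 1 \<and> (\<forall>i. x $ i \<in> Rring)}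
    \<and> {x :: real^3. x \<bullet> x = 1 \<and> (\<forall>i. x $ i \<in> Rring)} = {y. embV y \<in> Sigma4}"
proof -
  have U: "{x :: real^3. x \<bullet> x = 1 \<and> (\<forall>i. x $ i \<in> Rring)} = UU" by (simp add: UU_def)
  have S3: "Sigma3 = UU" using Sigma3_UU UU_Sigma3 by blast
  have SN: "(\<Union>n. Sn n \<union> Sn' n) = UU" using Sn_UU UU_Sn by blast
  have S4: "{y. embV y \<in> Sigma4} = UU"
  proof
    show "{y. embV y \<in> Sigma4} \<subseteq> UU" using Sigma4_UU embV_UU by blast
    show "UU \<subseteq> {y. embV y \<in> Sigma4}" using UU_Sigma3 Sigma3_Sigma4 by blast
  qed
  show ?thesis unfolding U S3 SN S4 by simp
qed

end
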